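(* Under the standing setup below, for every initial condition $x(0)\in[0,1]^n$ the opinion dynamics converge as $k\to\infty$ to a point $x^*(g,h)\in\mathbb R^n$ that does not depend on $x(0)$. The matrix $E\triangleq I-W+(g-h)\gamma I$ is invertible, and $$x^*(g,h)=E^{-1}\big(I-D-2\beta I+(h-g)\gamma I\big)s+E^{-1}\big((h+g)\beta\mathbf 1+(g^2-h^2)\gamma\mathbf 1\big),$$ where $D=\mathrm{diag}\big(\sum_{j}w_{1j},\dots,\sum_j w_{nj}\big)$ and $\mathbf 1$ is the all-ones vector.
   Context: Standing setup. Fix $n\in\mathbb N$ and $W=[w_{ij}]\in\mathbb R^{n\times n}$ with $w_{ij}\ge 0$ and $w_{ii}=0$. Let $\|W\|_\infty=\max_i\sum_j|w_{ij}|$, $\|W\|_1=\max_j\sum_i|w_{ij}|$, and let $\lambda$ be the spectral radius of $W$; assume there is a vector $c\in\mathbb R^n$ with all entries positive and $W^\top c=\lambda c$. Fix bias parameters $\beta,\gamma\in\mathbb R$ with $\beta\ge\gamma\ge0$ and $1-\max\{\|W\|_\infty,\|W\|_1\}>\max\{2\beta,4\gamma\}$. Fix innate opinions $s=(s_1,\dots,s_n)^\top\in[0,1]^n$, let $\overline s=\max_i s_i$, $\underline s=\min_i s_i$, and fix source opinions $g,h$ with $0\le g\le\underline s\le\overline s\le h\le1$. For $x\in\mathbb R$ set $\overline w(x)=\beta-\gamma|x-h|$, $\underline w(x)=\beta-\gamma|x-g|$, and $\alpha_i(x)=1-\sum_j w_{ij}-\overline w(x)-\underline w(x)$. The opinion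 dynamics are, for $i=1,\dots,n$ and $k\ge0$, $$x_i(k+1)=\alpha_i(x_i(k))s_i+\sum_{j=1}^n w_{ij}x_j(k)+\overline w(x_i(k))\,h+\underline w(x_i(k))\,g.$$ *)

theory Defs
  imports "HOL-Analysis.Analysis"
begin

definition row_sum_norm :: "real^'n^'n \<Rightarrow> real" where
  "row_sum_norm W = Max (range (\<lambda>i. \<Sum>j\<in>UNIV. \<bar>W$i$j\<bar>))"

definition col_sum_norm :: "real^'n^'n \<Rightarrow> real" where
  "col_sum_norm W = Max (range (\<lambda>j. \<Sum>i\<in>UNIV. \<bar>W$i$j\<bar>))"

definition spectral_radius :: "real^'n^'n \<Rightarrow> real" where
  "spectral_radius W = Sup (cmod ` {\<mu>. \<exists>v::complex^'n. v \<noteq> 0 \<and>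
      (\<chi> i j. complex_of_real (W$i$j)) *v v = \<mu> *s v})"

definition wbar :: "real \<Rightarrow> real \<Rightarrow> real \<Rightarrow> real \<Rightarrow> real" where
  "wbar \<beta> \<gamma> h x = \<beta> - \<gamma> * \<bar>x - h\<bar>"

definition wunder :: "real \<Rightarrow> real \<Rightarrow> real \<Rightarrow> real \<Rightarrow> real" where
  "wunder \<beta> \<gamma> g x = \<beta> - \<gamma> * \<bar>x - g\<bar>"

definition alpha :: "real^'n^'n \<Rightarrow> real \<Rightarrow> real \<Rightarrow> real \<Rightarrow> real \<Rightarrow> 'n \<Rightarrow> real \<Rightarrow> real" where
  "alpha W \<beta> \<gamma> g h i x = 1 - (\<Sum>j\<in>UNIV. W$i$j) - wbar \<beta> \<gamma> h x - wunder \<beta> \<gamma> g x"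

definition opinion_step ::
  "real^'n^'n \<Rightarrow> real \<Rightarrow> real \<Rightarrow> real \<Rightarrow> real \<Rightarrow> real^'n \<Rightarrow> real^'n \<Rightarrow> real^'n" where
  "opinion_step W \<beta> \<gamma> g h s x = (\<chi> i.
      alpha W \<beta> \<gamma> g h i (x$i) * s$i + (\<Sum>j\<in>UNIV. W$i$j * x$j)
      + wbar \<beta> \<gamma> h (x$i) * h + wunder \<beta> \<gamma> g (x$i) * g)"

definition opinion_traj ::
  "real^'n^'n \<Rightarrow> real \<Rightarrow> real \<Rightarrow> real \<Rightarrow> real \<Rightarrow> real^'n \<Rightarrow> real^'n \<Rightarrow> nat \<Rightarrow> real^'n" where
  "opinion_traj W \<beta> \<gamma> g h s x0 k = (opinion_step W \<beta> \<gamma> g h s ^^ k) x0"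

definition degree_mat :: "real^'n^'n \<Rightarrow> real^'n^'n" where
  "degree_mat W = (\<chi> i j. if i = j then (\<Sum>k\<in>UNIV. W$i$k) else 0)"

definition ones :: "real^'n" where
  "ones = (\<chi> i. 1)"

end

theory Submission imports Defs begin

lemma smat: "(c *\<^sub>R mat 1) *v x = c *\<^sub>R (x::real^'n)"
  by (metis matrix_vector_mul_lid scaleR_matrix_vector_assoc)

lemma mv1: "((mat 1 - W + c *\<^sub>R mat 1) *v x)$i = x$i - (\<Sum>j\<in>UNIV. W$i$j * x$j) + c * x$i"
  for W :: "real^'n^'n"
  apply (simp only: matrix_vector_mult_diff_rdistrib matrix_vector_mult_add_rdistrib smat matrix_vector_mul_lid)
  apply (simp add: matrix_vector_mult_def)
  done

lemma degmv: "(degree_mat W *v x)$i = (\<Sum>j\<in>UNIV. W$i$j) * x$i"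
  for W :: "real^'n^'n"
  by (simp add: matrix_vector_mult_def degree_mat_def if_distrib[of "\<lambda>u. u * _"] cong: if_cong)

lemma mv2: "((mat 1 - degree_mat W - a *\<^sub>R mat 1 + b *\<^sub>R mat 1) *v x)$i = x$i - (\<Sum>j\<in>UNIV. W$i$j) * x$i - a * x$i + b * x$i"
  for W :: "real^'n^'n"
  apply (simp only: matrix_vector_mult_diff_rdistrib matrix_vector_mult_add_rdistrib smat matrix_vector_mul_lid)
  apply (simp add: degmv)
  done

definition MM :: "real^'n \<Rightarrow> real" where "MM z = Max (range (\<lambda>i. \<bar>z$i\<bar>))"

lemma MM_ge: "\<bar>z$i\<bar> \<le> MM z"
  unfolding MM_def by (rule Max_ge) auto

lemma MM_ex: "\<exists>i. MM z = \<bar>z$i\<bar>"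
proof -
  have "MM z \<in> range (\<lambda>i. \<bar>z$i\<bar>)" unfolding MM_def by (rule Max_in) auto
  then show ?thesis by auto
qed

lemma MM_le: "(\<And>i. \<bar>z$i\<bar> \<le> c) \<Longrightarrow> MM z \<le> c"
  using MM_ex by metis

lemma inv_ker: "(\<forall>x. A *v x = 0 \<longrightarrow> x = 0) \<Longrightarrow> invertible (A::real^'n^'n)"
  using invertible_left_inverse matrix_left_invertible_ker by blast

lemma inv_right: "invertible (A::real^'n^'n) \<Longrightarrow> A *v (matrix_inv A *v v) = v"
proof -
  assume "invertible A"
  then have "\<exists>A'. A ** A' = mat 1 \<and> A' ** A = mat 1" by (simp add: invertible_def)
  then have "A ** matrix_inv A = mat 1" unfolding matrix_inv_def
    by (rule someI_ex[where P="\<lambda>A'. A ** A' = mat 1 \<and> A' ** A = mat 1", THEN conjunct1])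
  then show ?thesis by (metis matrix_vector_mul_assoc matrix_vector_mul_lid)
qed

lemma fform: "opinion_step W \<beta> \<gamma> g h s x $ i = (1 - (\<Sum>j\<in>UNIV. W$i$j) - 2*\<beta>)* s$i + \<beta>*h + \<beta>*g
   + \<gamma>*\<bar>x$i-h\<bar>* (s$i-h) + \<gamma>*\<bar>x$i-g\<bar>* (s$i-g) + (\<Sum>j\<in>UNIV. W$i$j * x$j)"
  by (simp add: opinion_step_def alpha_def wbar_def wunder_def algebra_simps)

lemma phi_lip:
  fixes \<gamma> g h s a b :: real
  assumes "\<gamma> \<ge> 0" "g \<le> s" "s \<le> h" "0 \<le> g" "h \<le> 1"
  shows "\<bar>\<gamma>*(\<bar>a-h\<bar> - \<bar>b-h\<bar>)*(s-h) + \<gamma>*(\<bar>a-g\<bar>-\<bar>b-g\<bar>)*(s-g)\<bar> \<le> \<gamma> * \<bar>a-b\<bar>"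
proof -
  have t1: "\<bar>\<bar>a-h\<bar> - \<bar>b-h\<bar>\<bar> \<le> \<bar>a-b\<bar>" by linarith
  have t2: "\<bar>\<bar>a-g\<bar> - \<bar>b-g\<bar>\<bar> \<le> \<bar>a-b\<bar>" by linarith
  have e1: "\<bar>\<gamma>*(\<bar>a-h\<bar> - \<bar>b-h\<bar>)*(s-h)\<bar> \<le> \<gamma>*\<bar>a-b\<bar>*(h-s)"
  proof -
    have "\<bar>\<gamma>*(\<bar>a-h\<bar> - \<bar>b-h\<bar>)*(s-h)\<bar> = \<gamma>*\<bar>\<bar>a-h\<bar> - \<bar>b-h\<bar>\<bar>*(h-s)"
      using assms by (simp add: abs_mult)
    also have "\<dots> \<le> \<gamma>*\<bar>a-b\<bar>*(h-s)"
      using assms t1 by (intro mult_right_mono mult_left_mono) auto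
    finally show ?thesis .
  qed
  have e2: "\<bar>\<gamma>*(\<bar>a-g\<bar> - \<bar>b-g\<bar>)*(s-g)\<bar> \<le> \<gamma>*\<bar>a-b\<bar>*(s-g)"
  proof -
    have "\<bar>\<gamma>*(\<bar>a-g\<bar> - \<bar>b-g\<bar>)*(s-g)\<bar> = \<gamma>*\<bar>\<bar>a-g\<bar> - \<bar>b-g\<bar>\<bar>*(s-g)"
      using assms by (simp add: abs_mult)
    also have "\<dots> \<le> \<gamma>*\<bar>a-b\<bar>*(s-g)"
      using assms t2 by (intro mult_right_mono mult_left_mono) auto
    finally show ?thesis .
  qed
  have e3: "\<gamma>*\<bar>a-b\<bar>*(h-s) + \<gamma>*\<bar>a-b\<bar>*(s-g) = (\<gamma>*\<bar>a-b\<bar>)*(h-g)" by (simp add: algebra_simps)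
  have e4: "(\<gamma>*\<bar>a-b\<bar>)*(h-g) \<le> (\<gamma>*\<bar>a-b\<bar>)*1"
    using assms by (intro mult_left_mono) auto
  show ?thesis using e1 e2 e3 e4 abs_triangle_ineq[of "\<gamma>*(\<bar>a-h\<bar> - \<bar>b-h\<bar>)*(s-h)" "\<gamma>*(\<bar>a-g\<bar>-\<bar>b-g\<bar>)*(s-g)"]
    by linarith
qed

lemma sum_bound:
  fixes W :: "real^'n^'n"
  assumes "\<forall>i j. W$i$j \<ge> 0"
  shows "\<bar>(\<Sum>j\<in>UNIV. W$i$j * x$j) - (\<Sum>j\<in>UNIV. W$i$j * y$j)\<bar> \<le> (\<Sum>j\<in>UNIV. W$i$j) * MM (x - y)"
proof -
  have "\<bar>(\<Sum>j\<in>UNIV. W$i$j * x$j) - (\<Sum>j\<in>UNIV. W$i$j * y$j)\<bar> = \<bar>\<Sum>j\<in>UNIV. W$i$j * (x-y)$j\<bar>"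
    by (simp add: sum_subtractf algebra_simps)
  also have "\<dots> \<le> (\<Sum>j\<in>UNIV. \<bar>W$i$j * (x-y)$j\<bar>)" by (rule sum_abs)
  also have "\<dots> \<le> (\<Sum>j\<in>UNIV. W$i$j * MM (x-y))"
  proof (rule sum_mono)
    fix j
    have "\<bar>(x-y)$j\<bar> \<le> MM (x-y)" by (rule MM_ge)
    then show "\<bar>W$i$j * (x-y)$j\<bar> \<le> W$i$j * MM (x-y)"
      using assms by (simp add: abs_mult mult_left_mono)
  qed
  also have "\<dots> = (\<Sum>j\<in>UNIV. W$i$j) * MM (x - y)" by (simp add: sum_distrib_right)
  finally show ?thesis .
qed

theorem theorem1:
  fixes W :: "real^'n^'n" and c s :: "real^'n" and lam \<beta> \<gamma> g h :: real
  assumes W_nonneg: "\<forall>i j. W$i$j \<ge> 0"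
    and W_diag: "\<forall>i. W$i$i = 0"
    and lam: "lam = spectral_radius W"
    and c_pos: "\<forall>i. c$i > 0"
    and c_eig: "transpose W *v c = lam *s c"
    and bias: "\<beta> \<ge> \<gamma>" "\<gamma> \<ge> 0"
    and norm_bound: "1 - max (row_sum_norm W) (col_sum_norm W) > max (2*\<beta>) (4*\<gamma>)"
    and s_range: "\<forall>i. 0 \<le> s$i \<and> s$i \<le> 1"
    and g_h: "0 \<le> g" "g \<le> Min (range (\<lambda>i. s$i))"
             "Max (range (\<lambda>i. s$i)) \<le> h" "h \<le> 1"
  shows "invertible (mat 1 - W + ((g - h) * \<gamma>) *\<^sub>R mat 1)
    \<and> (\<forall>x0 :: real^'n. (\<forall>i. 0 \<le> x0$i \<and> x0$i \<le> 1) \<longrightarrow>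
        opinion_traj W \<beta> \<gamma> g h s x0 \<longlonglongrightarrow>
          (matrix_inv (mat 1 - W + ((g - h) * \<gamma>) *\<^sub>R mat 1) *v
             ((mat 1 - degree_mat W - (2 * \<beta>) *\<^sub>R mat 1 + ((h - g) * \<gamma>) *\<^sub>R mat 1) *v s)
           + matrix_inv (mat 1 - W + ((g - h) * \<gamma>) *\<^sub>R mat 1) *v
             (((h + g) * \<beta>) *\<^sub>R ones + ((g^2 - h^2) * \<gamma>) *\<^sub>R ones)))"
proof -
  define d where "d i = (\<Sum>j\<in>UNIV. W$i$j)" for i
  define R where "R = row_sum_norm W"
  have dR: "d i \<le> R" for i
  proof -
    have "(\<Sum>j\<in>UNIV. \<bar>W$i$j\<bar>) \<le> R" unfolding R_def row_sum_norm_def by (rule Max_ge) auto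
    moreover have "(\<Sum>j\<in>UNIV. \<bar>W$i$j\<bar>) = d i" unfolding d_def using W_nonneg by simp
    ultimately show ?thesis by simp
  qed
  have d0: "d i \<ge> 0" for i unfolding d_def using W_nonneg by (simp add: sum_nonneg)
  have R1: "R < 1 - 4*\<gamma>" "R < 1 - 2*\<beta>" using norm_bound unfolding R_def by auto
  have sg: "g \<le> s$i" "s$i \<le> h" for i
  proof -
    have "Min (range (\<lambda>i. s$i)) \<le> s$i" by (rule Min_le) auto
    then show "g \<le> s$i" using g_h by simp
    have "s$i \<le> Max (range (\<lambda>i. s$i))" by (rule Max_ge) auto
    then show "s$i \<le> h" using g_h by simp
  qed
  have hg: "g \<le> h" using sg by (meson order_trans)
  have hgg': "\<gamma> * (h - g) \<le> \<gamma>" using mult_left_mono[of "h-g" 1 \<gamma>] g_h bias by simp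
  define f where "f = opinion_step W \<beta> \<gamma> g h s"
  define L where "L = \<gamma> + R"
  have L1: "L < 1" "L \<ge> 0" using R1 bias dR[of undefined] d0[of undefined] unfolding L_def by linarith+
  have ff: "f x $ i = (1 - d i - 2*\<beta>) * s$i + \<beta>*h + \<beta>*g
   + \<gamma>*\<bar>x$i-h\<bar>*(s$i-h) + \<gamma>*\<bar>x$i-g\<bar>*(s$i-g) + (\<Sum>j\<in>UNIV. W$i$j * x$j)" for x i
    unfolding f_def d_def by (rule fform)
  define K where "K = (h+g)*\<beta> + (g^2-h^2)*\<gamma>"
  define al where "al i = 1 - d i - 2*\<beta> + \<gamma>*(h-g)" for i
  have al0: "al i \<ge> 0" for i using dR[of i] R1 bias hg unfolding al_def
    using hgg' mult_nonneg_nonneg[of \<gamma> "h-g"] by linarith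
  have affine: "f x $ i = al i * s$i + (\<Sum>j\<in>UNIV. W$i$j * x$j) + \<gamma>*(h-g)*x$i + K"
    if "g \<le> x$i" "x$i \<le> h" for x i
  proof -
    have "\<bar>x$i-h\<bar> = h - x$i" "\<bar>x$i-g\<bar> = x$i - g" using that by auto
    then show ?thesis unfolding ff al_def K_def by (simp add: algebra_simps power2_eq_square)
  qed
  have contr: "\<bar>f x $ i - f y $ i\<bar> \<le> L * MM (x - y)" for x y i
  proof -
    have "f x $ i - f y $ i = (\<gamma>*(\<bar>x$i-h\<bar> - \<bar>y$i-h\<bar>)*(s$i-h) + \<gamma>*(\<bar>x$i-g\<bar>-\<bar>y$i-g\<bar>)*(s$i-g))
       + ((\<Sum>j\<in>UNIV. W$i$j * x$j) - (\<Sum>j\<in>UNIV. W$i$j * y$j))"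
      unfolding ff by (simp add: algebra_simps)
    moreover have "\<bar>\<gamma>*(\<bar>x$i-h\<bar> - \<bar>y$i-h\<bar>)*(s$i-h) + \<gamma>*(\<bar>x$i-g\<bar>-\<bar>y$i-g\<bar>)*(s$i-g)\<bar> \<le> \<gamma> * \<bar>x$i - y$i\<bar>"
      by (rule phi_lip) (use bias sg g_h in auto)
    moreover have "\<gamma> * \<bar>x$i - y$i\<bar> \<le> \<gamma> * MM (x-y)"
      using MM_ge[of "x-y" i] bias by (simp add: mult_left_mono)
    moreover have "\<bar>(\<Sum>j\<in>UNIV. W$i$j * x$j) - (\<Sum>j\<in>UNIV. W$i$j * y$j)\<bar> \<le> d i * MM (x-y)"
      unfolding d_def by (rule sum_bound[OF W_nonneg])
    moreover have "d i * MM (x-y) \<le> R * MM (x-y)"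
      using dR[of i] MM_ge[of "x-y" i] by (intro mult_right_mono) auto
    moreover have "(\<gamma> + R) * MM (x-y) = \<gamma> * MM (x-y) + R * MM (x-y)" by (simp add: distrib_right)
    ultimately show ?thesis unfolding L_def
      using abs_triangle_ineq[of "\<gamma>*(\<bar>x$i-h\<bar> - \<bar>y$i-h\<bar>)*(s$i-h) + \<gamma>*(\<bar>x$i-g\<bar>-\<bar>y$i-g\<bar>)*(s$i-g)"
        "(\<Sum>j\<in>UNIV. W$i$j * x$j) - (\<Sum>j\<in>UNIV. W$i$j * y$j)"] by linarith
  qed
  define E where "E = mat 1 - W + ((g - h) * \<gamma>) *\<^sub>R mat 1"
  have Ev: "(E *v x) $ i = x$i - (\<Sum>j\<in>UNIV. W$i$j * x$j) + ((g - h) * \<gamma>) * x$i" for x i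
    unfolding E_def by (rule mv1)
  have ker: "E *v z = 0 \<Longrightarrow> z = 0" for z
  proof -
    assume z: "E *v z = 0"
    obtain i where i: "MM z = \<bar>z$i\<bar>" using MM_ex by blast
    have "z$i * (1 - (h - g) * \<gamma>) = (\<Sum>j\<in>UNIV. W$i$j * z$j) - (\<Sum>j\<in>UNIV. W$i$j * 0$j)"
      using Ev[of z i] z by (simp add: algebra_simps)
    moreover have hgg: "(h - g) * \<gamma> \<le> \<gamma>" using hgg' by (simp add: mult.commute)
    moreover have "\<bar>z$i\<bar> * (1 - (h - g) * \<gamma>) = \<bar>z$i * (1 - (h - g) * \<gamma>)\<bar>"
      using hgg R1 dR[of i] d0[of i] by (simp add: abs_mult)
    ultimately have "\<bar>z$i\<bar> * (1 - (h - g) * \<gamma>) \<le> d i * MM (z - 0)"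
      using sum_bound[OF W_nonneg, of i z 0] unfolding d_def by simp
    then have "MM z * (1 - (h - g) * \<gamma>) \<le> R * MM z"
    proof -
      have "d i * MM z \<le> R * MM z" using dR[of i] MM_ge[of z i] by (intro mult_right_mono) auto
      then show ?thesis using \<open>\<bar>z$i\<bar> * (1 - (h - g) * \<gamma>) \<le> d i * MM (z - 0)\<close> i by simp
    qed
    moreover have "MM z \<ge> 0" using MM_ge[of z i] by simp
    moreover have "MM z * (1 - (h - g) * \<gamma>) \<ge> MM z * (1 - \<gamma>)"
      using hgg \<open>MM z \<ge> 0\<close> by (intro mult_left_mono) auto
    ultimately have "MM z * (1 - \<gamma>) - R * MM z \<le> 0" by linarith
    then have "MM z * (1 - \<gamma> - R) \<le> 0" by (simp add: algebra_simps)
    moreover have "1 - \<gamma> - R > 0" using R1 bias by linarith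
    ultimately have "MM z \<le> 0" by (simp add: mult_le_0_iff)
    then have "\<forall>j. z$j = 0" using MM_ge[of z] by (metis abs_le_zero_iff order_trans)
    then show "z = 0" by (simp add: vec_eq_iff)
  qed
  have invE: "invertible E" using ker by (intro inv_ker) blast
  define a where "a = (mat 1 - degree_mat W - (2 * \<beta>) *\<^sub>R mat 1 + ((h - g) * \<gamma>) *\<^sub>R mat 1) *v s"
  define b where "b = ((h + g) * \<beta>) *\<^sub>R ones + ((g^2 - h^2) * \<gamma>) *\<^sub>R (ones::real^'n)"
  define p where "p = matrix_inv E *v a + matrix_inv E *v b"
  have Ep: "E *v p = a + b" unfolding p_def
    by (simp add: matrix_vector_right_distrib[symmetric] inv_right[OF invE])
  have peq: "p$i = al i * s$i + (\<Sum>j\<in>UNIV. W$i$j * p$j) + \<gamma>*(h-g)*p$i + K" for i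
  proof -
    have ai: "a$i = s$i - d i * s$i - (2 * \<beta>) * s$i + ((h - g) * \<gamma>) * s$i"
      unfolding a_def d_def by (rule mv2)
    have bi: "b$i = (h + g) * \<beta> + (g^2 - h^2) * \<gamma>" by (simp add: b_def ones_def)
    have "(E *v p)$i = a$i + b$i" using Ep by simp
    then show ?thesis unfolding Ev ai bi al_def K_def
      by (simp add: algebra_simps)
  qed
  have pbox: "g \<le> p$i \<and> p$i \<le> h" for i
  proof
    obtain m where m: "\<forall>j. p$j \<le> p$m" using finite_UNIV
    proof -
      have "Max (range (\<lambda>j. p$j)) \<in> range (\<lambda>j. p$j)" by (rule Max_in) auto
      then obtain m where "Max (range (\<lambda>j. p$j)) = p$m" by (rule rangeE)
      moreover have "\<forall>j. p$j \<le> Max (range (\<lambda>j. p$j))" by (auto intro: Max_ge)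
      ultimately show ?thesis using that by metis
    qed
    have "(\<Sum>j\<in>UNIV. W$m$j * p$j) \<le> (\<Sum>j\<in>UNIV. W$m$j * p$m)"
      using m W_nonneg by (intro sum_mono mult_left_mono) auto
    then have S: "(\<Sum>j\<in>UNIV. W$m$j * p$j) \<le> d m * p$m" unfolding d_def by (simp add: sum_distrib_right)
    have "p$m \<le> h"
    proof (rule ccontr)
      assume "\<not> p$m \<le> h"
      define t where "t = p$m - h"
      have t: "t > 0" using \<open>\<not> p$m \<le> h\<close> t_def by simp
      have "p$m \<le> al m * h + d m * p$m + \<gamma>*(h-g)*p$m + K"
        using peq[of m] S al0[of m] sg[of m] mult_left_mono[of "s$m" h "al m"] by linarith
      then have "t \<le> d m * t + \<gamma>*(h-g)*t - (h-g)*(\<beta> - \<gamma>*(h-g))"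
        unfolding t_def al_def K_def by (simp add: algebra_simps power2_eq_square)
      moreover have "(h-g)*(\<beta> - \<gamma>*(h-g)) \<ge> 0"
        using hg bias hgg' by (intro mult_nonneg_nonneg) (auto simp: mult.commute)
      moreover have "\<gamma>*(h-g)*t \<le> \<gamma>*t" using t hgg' by (intro mult_right_mono) auto
      moreover have "d m * t \<le> R * t" using dR[of m] t by (simp add: mult_right_mono)
      ultimately have "t * 1 \<le> t * (R + \<gamma>)" by (simp add: algebra_simps)
      then have "1 \<le> R + \<gamma>" using t by simp
      then show False using R1 bias by linarith
    qed
    then show "p$i \<le> h" using m by (meson order_trans)
  next
    obtain m where m: "\<forall>j. p$m \<le> p$j" using finite_UNIV
    proof -
      have "Min (range (\<lambda>j. p$j)) \<in> range (\<lambda>j. p$j)" by (rule Min_in) auto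
      then obtain m where "Min (range (\<lambda>j. p$j)) = p$m" by (rule rangeE)
      moreover have "\<forall>j. Min (range (\<lambda>j. p$j)) \<le> p$j" by (auto intro: Min_le)
      ultimately show ?thesis using that by metis
    qed
    have "(\<Sum>j\<in>UNIV. W$m$j * p$m) \<le> (\<Sum>j\<in>UNIV. W$m$j * p$j)"
      using m W_nonneg by (intro sum_mono mult_left_mono) auto
    then have S: "d m * p$m \<le> (\<Sum>j\<in>UNIV. W$m$j * p$j)" unfolding d_def by (simp add: sum_distrib_right)
    have "g \<le> p$m"
    proof (rule ccontr)
      assume "\<not> g \<le> p$m"
      define t where "t = g - p$m"
      have t: "t > 0" using \<open>\<not> g \<le> p$m\<close> t_def by simp
      have "p$m \<ge> al m * g + d m * p$m + \<gamma>*(h-g)*p$m + K"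
        using peq[of m] S al0[of m] sg[of m] mult_left_mono[of g "s$m" "al m"] by linarith
      then have "t \<le> d m * t + \<gamma>*(h-g)*t - (h-g)*(\<beta> - \<gamma>*(h-g))"
        unfolding t_def al_def K_def by (simp add: algebra_simps power2_eq_square)
      moreover have "(h-g)*(\<beta> - \<gamma>*(h-g)) \<ge> 0"
        using hg bias hgg' by (intro mult_nonneg_nonneg) (auto simp: mult.commute)
      moreover have "\<gamma>*(h-g)*t \<le> \<gamma>*t" using t hgg' by (intro mult_right_mono) auto
      moreover have "d m * t \<le> R * t" using dR[of m] t by (simp add: mult_right_mono)
      ultimately have "t * 1 \<le> t * (R + \<gamma>)" by (simp add: algebra_simps)
      then have "1 \<le> R + \<gamma>" using t by simp
      then show False using R1 bias by linarith
    qed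
    then show "g \<le> p$i" using m by (meson order_trans)
  qed
  have fp: "f p = p"
  proof -
    have "f p $ i = p $ i" for i using affine[of p i] pbox[of i] peq[of i] by simp
    then show ?thesis by (simp add: vec_eq_iff)
  qed
  have conv: "opinion_traj W \<beta> \<gamma> g h s x0 \<longlonglongrightarrow> p" for x0
  proof -
    define x where "x k = opinion_traj W \<beta> \<gamma> g h s x0 k" for k
    have xs: "x (Suc k) = f (x k)" for k unfolding x_def opinion_traj_def f_def by simp
    have bd: "MM (x k - p) \<le> L^k * MM (x0 - p)" for k
    proof (induction k)
      case 0 then show ?case by (simp add: x_def opinion_traj_def)
    next
      case (Suc k)
      have "MM (x (Suc k) - p) \<le> L * MM (x k - p)"
      proof (rule MM_le)
        fix i
        show "\<bar>(x (Suc k) - p) $ i\<bar> \<le> L * MM (x k - p)"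
          using contr[where x="x k" and y=p and i=i] by (metis xs fp vector_minus_component)
      qed
      also have "\<dots> \<le> L * (L^k * MM (x0 - p))" using Suc L1 by (simp add: mult_left_mono)
      finally show ?case by simp
    qed
    have "(\<lambda>k. real CARD('n) * (L^k * MM (x0 - p))) \<longlonglongrightarrow> real CARD('n) * (0 * MM (x0 - p))"
      using L1 by (intro tendsto_intros LIMSEQ_power_zero) auto
    then have lim0: "(\<lambda>k. real CARD('n) * (L^k * MM (x0 - p))) \<longlonglongrightarrow> 0" by simp
    have "norm (x k - p) \<le> real CARD('n) * (L^k * MM (x0 - p))" for k
    proof -
      have "norm (x k - p) \<le> (\<Sum>i\<in>UNIV. \<bar>(x k - p)$i\<bar>)" by (rule norm_le_l1_cart)
      also have "\<dots> \<le> (\<Sum>i\<in>(UNIV::'n set). L^k * MM (x0 - p))"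
        using bd[of k] MM_ge[of "x k - p"] by (intro sum_mono) (meson order_trans)
      finally show ?thesis by simp
    qed
    then have "(\<lambda>k. x k - p) \<longlonglongrightarrow> 0"
      by (intro Lim_null_comparison[OF _ lim0]) auto
    then show ?thesis unfolding x_def by (simp add: LIM_zero_iff)
  qed
  show ?thesis using invE conv unfolding E_def p_def a_def b_def by blast
qed

end
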